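(* Let $n\ge1$ be an integer and, for $j=0,\dots,n$, let $f_{2j}$ be a homogeneous polynomial of degree $2j$ with complex coefficients in the four entries of a $2\times2$ matrix, not divisible by $\det$ (viewed as a degree-$2$ polynomial). Let $S_{2n}\subset\mathbb{K}P^3$ be the surface defined by $F_{2n}(A)=0$, where $$F_{2n}(A)=\sum_{j=0}^n t^{-j(j+1)}(\det A)^{n-j}f_{2j}(A).$$ Let $C_{2j}=\{[B]_{\mathbb{C}^*}\in Q(\mathbb{C}): f_{2j}(B)=0\}$. For $j=1,\dots,n$ let $\sigma_j$ be the section of $\mathcal{S}$ over $Q(\mathbb{C})\setminus(C_{2j-2}\cup C_{2j})$ given by $\sigma_j([B]_{\mathbb{C}^*})=\left[\sqrt{-\tfrac{f_{2j-2}(B)}{f_{2j}(B)}}\,B\right]_{\mathbb{R}^*}$. Then $$\operatorname{VAL}(S_{2n})\subset\Sigma_\infty\cup\Sigma_R\cup\Sigma_C,$$ where $\Sigma_\infty=\{\infty\}\times C_{2n}$, $\Sigma_R=\bigcup_{j=1}^{n-1}((j,j+1)\cap\mathbb{Q})\times\mathcal{S}|_{C_{2j}}\ \cup\ ((n,\infty)\cap\mathbb{Q})\times\mathcal{S}|_{C_{2n}}$, and $\Sigma_C=\bigcup_{j=1}^n\{j\}\times\Big(\sigma_j\big(Q(\mathbb{C})\setminus(C_{2j-2}\cup C_{2j})\big)\cup\mathcal{S}|_{C_{2j-2}\cap C_{2j}}\Big)$.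
   Context: Matrices and classes. For a $2\times 2$ matrix $B=\begin{pmatrix}a&b\\ c&d\end{pmatrix}$ write $B^{\mathbf c}=\begin{pmatrix}d&-b\\ -c&a\end{pmatrix}$; $B^*$ is the conjugate transpose. $\mathbb{C}P^3$ is the projectivization of the space of complex $2\times2$ matrices; $[B]_{\mathbb{C}^*}$ is the class of a nonzero matrix up to nonzero complex scalars, $[B]_{\mathbb{R}^*}$ its class up to nonzero real scalars. $Q(\mathbb{C})=\{[B]_{\mathbb{C}^*}:\det B=0\}$, $PSU(2)=\{[U]_{\mathbb{C}^*}:U\in SU(2)\}$. Circle bundle. $\mathcal{S}$ is the set of classes $[B]_{\mathbb{R}^*}$ of complex $2\times2$ matrices of rank one, with projection $\pi\colon\mathcal{S}\to Q(\mathbb{C})$, $[B]_{\mathbb{R}^*}\mapsto[B]_{\mathbb{C}^*}$; for $Z\subset Q(\mathbb{C})$, $\mathcal{S}|_Z=\pi^{-1}(Z)$; a section over $Z$ is a map $\sigma\colon Z\to\mathcal{S}$ with $\pi\circ\sigma=\mathrm{id}_Z$ (the formula for $\sigma_j$ is independent of the representative $B$ and the choice of square root, since classes are taken up to real scalars). Cone notation (subsets of $\mathbb{C}P^3$). For $I\subset(0,\infty)$ and $T\subset\mathcal{S}$, $I\times T:=\{[e^\alpha B+e^{-\alpha}(B^{\mathbf c})^*]_{\mathbb{C}^*}:\alpha\in I,\ [B]_{\mathbb{R}^*}\in T\}$; for $Y\subset Q(\mathbb{C})$, $\{\infty\}\times Y:=Y$. Field and valuation. $\mathbb{K}$ is the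 field of Puiseux series in $t$ (with $t\to\infty$) with complex coefficients, i.e. series $\sum_q a_q t^q$ with $a_q\in\mathbb{C}$ and exponents in $\frac1N\mathbb{Z}$ for some $N\ge1$, bounded above. $\mathbb{K}P^3$ is the projectivization of the space of $2\times 2$ matrices over $\mathbb{K}$. Every nonzero matrix $A$ over $\mathbb{K}$ can be written uniquely as $A=t^\alpha B+(\text{terms with exponents}<\alpha)$ with $\alpha\in\mathbb{Q}$ and $B$ a nonzero complex matrix. The map $\operatorname{VAL}\colon\mathbb{K}P^3\to\mathbb{C}P^3$ is: if $\det A=0$, $\operatorname{VAL}([A])=[B]_{\mathbb{C}^*}$; if $\det A\ne0$, rescale $A$ so that $\det A=1$ (then $\alpha\ge0$), and set $\operatorname{VAL}([A])=[e^\alpha B+e^{-\alpha}(B^{\mathbf c})^*]_{\mathbb{C}^*}$. *)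

theory Defs
  imports Complex_Main
begin

section \<open>2x2 matrices (entries a b c d, i.e. [[a,b],[c,d]])\<close>

datatype 'a mat2 = M2 'a 'a 'a 'a

fun ents :: "'a mat2 \<Rightarrow> 'a list" where
  "ents (M2 a b c d) = [a, b, c, d]"

fun cdet :: "complex mat2 \<Rightarrow> complex" where
  "cdet (M2 a b c d) = a * d - b * c"

definition czero :: "complex mat2" where "czero = M2 0 0 0 0"

definition csmult :: "complex \<Rightarrow> complex mat2 \<Rightarrow> complex mat2" where
  "csmult z B = map_mat2 (\<lambda>x. z * x) B"

fun cadd :: "complex mat2 \<Rightarrow> complex mat2 \<Rightarrow> complex mat2" where
  "cadd (M2 a b c d) (M2 a' b' c' d') = M2 (a + a') (b + b') (c + c') (d + d')"

fun adjc :: "complex mat2 \<Rightarrow> complex mat2" where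
  "adjc (M2 a b c d) = M2 d (- b) (- c) a"

fun cstar :: "complex mat2 \<Rightarrow> complex mat2" where
  "cstar (M2 a b c d) = M2 (cnj a) (cnj c) (cnj b) (cnj d)"

text \<open>class up to nonzero complex scalars (a point of CP^3) and up to nonzero real scalars\<close>
definition cproj :: "complex mat2 \<Rightarrow> complex mat2 set" where
  "cproj B = {csmult z B | z. z \<noteq> 0}"

definition rproj :: "complex mat2 \<Rightarrow> complex mat2 set" where
  "rproj B = {csmult (complex_of_real r) B | r. r \<noteq> 0}"

definition Qset :: "complex mat2 set set" where
  "Qset = {cproj B | B. B \<noteq> czero \<and> cdet B = 0}"

text \<open>the circle bundle S restricted to Z \<subseteq> Q(C)\<close>
definition restrS :: "complex mat2 set set \<Rightarrow> complex mat2 set set" where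
  "restrS Z = {rproj B | B. B \<noteq> czero \<and> cdet B = 0 \<and> cproj B \<in> Z}"

text \<open>the cone notation I \<times> T\<close>
definition cone :: "real set \<Rightarrow> complex mat2 set set \<Rightarrow> complex mat2 set set" where
  "cone I T = {cproj (cadd (csmult (complex_of_real (exp \<alpha>)) B)
                           (csmult (complex_of_real (exp (- \<alpha>))) (cstar (adjc B))))
               | \<alpha> B. \<alpha> \<in> I \<and> B \<noteq> czero \<and> rproj B \<in> T}"

section \<open>Homogeneous polynomials in the four entries (coefficient functions)\<close>

type_synonym cpoly4 = "nat \<times> nat \<times> nat \<times> nat \<Rightarrow> complex"

definition homog :: "cpoly4 \<Rightarrow> nat \<Rightarrow> bool" where
  "homog p d \<longleftrightarrow> (\<forall>i j k l. p (i, j, k, l) \<noteq> 0 \<longrightarrow> i + j + k + l = d)"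

text \<open>coefficients of the product det * g, det = x1 x4 - x2 x3\<close>
fun detmul :: "cpoly4 \<Rightarrow> cpoly4" where
  "detmul g (i, j, k, l) =
     (if 1 \<le> i \<and> 1 \<le> l then g (i - 1, j, k, l - 1) else 0)
   - (if 1 \<le> j \<and> 1 \<le> k then g (i, j - 1, k - 1, l) else 0)"

definition det_dvd :: "cpoly4 \<Rightarrow> bool" where
  "det_dvd p \<longleftrightarrow> (\<exists>g. finite {e. g e \<noteq> 0} \<and> (\<forall>e. p e = detmul g e))"

fun evalC :: "cpoly4 \<Rightarrow> complex mat2 \<Rightarrow> complex" where
  "evalC p (M2 a b c d) =
     (\<Sum>e\<in>{e. p e \<noteq> 0}. p e * (case e of (i, j, k, l) \<Rightarrow> a ^ i * b ^ j * c ^ k * d ^ l))"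

section \<open>Puiseux series (t \<rightarrow> \<infinity>): coefficient functions rat \<Rightarrow> complex\<close>

type_synonym ps = "rat \<Rightarrow> complex"

definition puiseux :: "ps \<Rightarrow> bool" where
  "puiseux a \<longleftrightarrow> (\<exists>N::nat. N \<ge> 1 \<and> (\<forall>q. a q \<noteq> 0 \<longrightarrow> q * of_nat N \<in> \<int>))
                  \<and> bdd_above {q. a q \<noteq> 0}"

definition pzero :: ps where "pzero = (\<lambda>_. 0)"

definition tpow :: "rat \<Rightarrow> ps" where
  "tpow r = (\<lambda>q. if q = r then 1 else 0)"

text \<open>product (Cauchy convolution; finite sums for Puiseux series)\<close>
definition conv :: "ps \<Rightarrow> ps \<Rightarrow> ps" where
  "conv a b = (\<lambda>q. \<Sum>r\<in>{r. a r \<noteq> 0 \<and> b (q - r) \<noteq> 0}. a r * b (q - r))"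

primrec ppow :: "ps \<Rightarrow> nat \<Rightarrow> ps" where
  "ppow a 0 = tpow 0"
| "ppow a (Suc n) = conv a (ppow a n)"

fun Kdet :: "ps mat2 \<Rightarrow> ps" where
  "Kdet (M2 a b c d) = (\<lambda>q. conv a d q - conv b c q)"

fun evalK :: "cpoly4 \<Rightarrow> ps mat2 \<Rightarrow> ps" where
  "evalK p (M2 a b c d) = (\<lambda>q.
     \<Sum>e\<in>{e. p e \<noteq> 0}. p e * (case e of (i, j, k, l) \<Rightarrow>
        conv (conv (ppow a i) (ppow b j)) (conv (ppow c k) (ppow d l)) q))"

text \<open>nonzero 2x2 matrices over K (representatives of points of KP^3)\<close>
definition Kmat :: "ps mat2 \<Rightarrow> bool" where
  "Kmat A \<longleftrightarrow> (\<forall>x\<in>set (ents A). puiseux x) \<and> A \<noteq> M2 pzero pzero pzero pzero"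

text \<open>A = t^alpha B + lower order terms\<close>
definition lexp :: "ps mat2 \<Rightarrow> rat" where
  "lexp A = (GREATEST q. \<exists>x\<in>set (ents A). x q \<noteq> 0)"

definition lead :: "ps mat2 \<Rightarrow> complex mat2" where
  "lead A = map_mat2 (\<lambda>x. x (lexp A)) A"

definition VAL :: "ps mat2 \<Rightarrow> complex mat2 set" where
  "VAL A = (if Kdet A = pzero then cproj (lead A)
            else (let l = (SOME l. puiseux l \<and> conv (conv l l) (Kdet A) = tpow 0);
                      A' = map_mat2 (conv l) A;
                      \<alpha> = real_of_rat (lexp A');
                      B = lead A'
                  in cproj (cadd (csmult (complex_of_real (exp \<alpha>)) B)
                                 (csmult (complex_of_real (exp (- \<alpha>))) (cstar (adjc B))))))"

section \<open>The objects of the theorem (f j stands for f_{2j})\<close>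

definition Fpoly :: "nat \<Rightarrow> (nat \<Rightarrow> cpoly4) \<Rightarrow> ps mat2 \<Rightarrow> ps" where
  "Fpoly n f A = (\<lambda>q. \<Sum>j\<in>{0..n}.
      conv (tpow (- of_nat (j * (j + 1))))
           (conv (ppow (Kdet A) (n - j)) (evalK (f j) A)) q)"

definition Surf :: "nat \<Rightarrow> (nat \<Rightarrow> cpoly4) \<Rightarrow> ps mat2 set" where
  "Surf n f = {A. Kmat A \<and> Fpoly n f A = pzero}"

definition Cset :: "(nat \<Rightarrow> cpoly4) \<Rightarrow> nat \<Rightarrow> complex mat2 set set" where
  "Cset f j = {cproj B | B. B \<noteq> czero \<and> cdet B = 0 \<and> evalC (f j) B = 0}"

definition sigma :: "(nat \<Rightarrow> cpoly4) \<Rightarrow> nat \<Rightarrow> complex mat2 \<Rightarrow> complex mat2 set" where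
  "sigma f j B = rproj (csmult (csqrt (- (evalC (f (j - 1)) B / evalC (f j) B))) B)"

definition sigma_img :: "(nat \<Rightarrow> cpoly4) \<Rightarrow> nat \<Rightarrow> complex mat2 set set" where
  "sigma_img f j = {sigma f j B | B. B \<noteq> czero \<and>
                     cproj B \<in> Qset - (Cset f (j - 1) \<union> Cset f j)}"

definition Sig_inf :: "nat \<Rightarrow> (nat \<Rightarrow> cpoly4) \<Rightarrow> complex mat2 set set" where
  "Sig_inf n f = Cset f n"

definition Sig_R :: "nat \<Rightarrow> (nat \<Rightarrow> cpoly4) \<Rightarrow> complex mat2 set set" where
  "Sig_R n f = (\<Union>j\<in>{1..n - 1}. cone ({real j<..<real j + 1} \<inter> \<rat>) (restrS (Cset f j)))
               \<union> cone ({real n<..} \<inter> \<rat>) (restrS (Cset f n))"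

definition Sig_C :: "nat \<Rightarrow> (nat \<Rightarrow> cpoly4) \<Rightarrow> complex mat2 set set" where
  "Sig_C n f = (\<Union>j\<in>{1..n}. cone {real j}
                   (sigma_img f j \<union> restrS (Cset f (j - 1) \<inter> Cset f j)))"

end

theory Submission
  imports Defs "HOL-Computational_Algebra.Formal_Power_Series"
begin


definition bnd :: "ps \<Rightarrow> rat \<Rightarrow> complex \<Rightarrow> bool" where
  "bnd x s v \<longleftrightarrow> (\<forall>q>s. x q = 0) \<and> x s = v"

lemma bnd_conv:
  assumes "bnd a s1 v1" "bnd b s2 v2"
  shows "bnd (conv a b) (s1 + s2) (v1 * v2)"
proof -
  have z: "{r. a r \<noteq> 0 \<and> b (q - r) \<noteq> 0} = {}" if "q > s1 + s2" for q
  proof -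
    { fix r assume r: "a r \<noteq> 0" "b (q - r) \<noteq> 0"
      have "r \<le> s1" using r assms unfolding bnd_def by (meson not_le)
      moreover have "q - r \<le> s2" using r assms unfolding bnd_def by (meson not_le)
      ultimately have False using that by linarith }
    then show ?thesis by blast
  qed
  have "{r. a r \<noteq> 0 \<and> b (s1 + s2 - r) \<noteq> 0} \<subseteq> {s1}"
  proof
    fix r assume "r \<in> {r. a r \<noteq> 0 \<and> b (s1 + s2 - r) \<noteq> 0}"
    then have r: "a r \<noteq> 0" "b (s1 + s2 - r) \<noteq> 0" by auto
    have "r \<le> s1" using r assms unfolding bnd_def by (meson not_le)
    moreover have "s1 + s2 - r \<le> s2" using r assms unfolding bnd_def by (meson not_le)
    ultimately show "r \<in> {s1}" by simp
  qed
  then have "{r. a r \<noteq> 0 \<and> b (s1 + s2 - r) \<noteq> 0} = {} \<or> {r. a r \<noteq> 0 \<and> b (s1 + s2 - r) \<noteq> 0} = {s1}"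
    by blast
  then have "conv a b (s1 + s2) = a s1 * b s2"
  proof
    assume e: "{r. a r \<noteq> 0 \<and> b (s1 + s2 - r) \<noteq> 0} = {}"
    then have "a s1 * b s2 = 0" by auto
    then show ?thesis unfolding conv_def e by simp
  next
    assume e: "{r. a r \<noteq> 0 \<and> b (s1 + s2 - r) \<noteq> 0} = {s1}"
    then show ?thesis unfolding conv_def e by simp
  qed
  moreover have "conv a b q = 0" if "q > s1 + s2" for q
    unfolding conv_def z[OF that] by simp
  ultimately show ?thesis using assms unfolding bnd_def by auto
qed

lemma bnd_tpow: "bnd (tpow s) s 1"
  unfolding bnd_def tpow_def by auto

lemma bnd_pzero: "bnd pzero s 0"
  unfolding bnd_def pzero_def by auto

lemma bnd_ppow: "bnd D s v \<Longrightarrow> bnd (ppow D m) (of_nat m * s) (v ^ m)"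
proof (induction m)
  case 0 then show ?case using bnd_tpow by simp
next
  case (Suc m)
  have "bnd (conv D (ppow D m)) (s + of_nat m * s) (v * v ^ m)"
    using bnd_conv[OF Suc.prems Suc.IH[OF Suc.prems]] .
  then show ?case by (simp add: algebra_simps)
qed

lemma bnd_Kdet:
  assumes "bnd a s (a s)" "bnd b s (b s)" "bnd c s (c s)" "bnd d s (d s)"
  shows "bnd (Kdet (M2 a b c d)) (2 * s) (cdet (M2 (a s) (b s) (c s) (d s)))"
proof -
  have 1: "bnd (conv a d) (s + s) (a s * d s)" by (rule bnd_conv[OF assms(1,4)])
  have 2: "bnd (conv b c) (s + s) (b s * c s)" by (rule bnd_conv[OF assms(2,3)])
  have e: "2 * s = s + s" by simp
  show ?thesis unfolding bnd_def e
  proof (intro conjI allI impI)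
    fix q assume "q > s + s"
    then show "Kdet (M2 a b c d) q = 0" using 1 2 unfolding bnd_def by simp
  next
    show "Kdet (M2 a b c d) (s + s) = cdet (M2 (a s) (b s) (c s) (d s))"
      using 1 2 unfolding bnd_def by simp
  qed
qed

lemma bnd_evalK:
  assumes "bnd a s (a s)" "bnd b s (b s)" "bnd c s (c s)" "bnd d s (d s)"
    and h: "homog p deg"
  shows "bnd (evalK p (M2 a b c d)) (of_nat deg * s) (evalC p (M2 (a s) (b s) (c s) (d s)))"
proof -
  have mono: "bnd (conv (conv (ppow a i) (ppow b j)) (conv (ppow c k) (ppow d l)))
        (of_nat deg * s) (a s ^ i * b s ^ j * c s ^ k * d s ^ l)"
    if "p (i, j, k, l) \<noteq> 0" for i j k l
  proof -
    have e: "i + j + k + l = deg" using h that unfolding homog_def by blast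
    have "bnd (conv (conv (ppow a i) (ppow b j)) (conv (ppow c k) (ppow d l)))
        ((of_nat i * s + of_nat j * s) + (of_nat k * s + of_nat l * s))
        ((a s ^ i * b s ^ j) * (c s ^ k * d s ^ l))"
      by (intro bnd_conv bnd_ppow assms)
    moreover have "(of_nat i * s + of_nat j * s) + (of_nat k * s + of_nat l * s) = of_nat deg * s"
      using e[symmetric] by (simp add: algebra_simps)
    ultimately show ?thesis by (simp add: mult.assoc)
  qed
  show ?thesis unfolding bnd_def
  proof (intro conjI allI impI)
    fix q assume q: "q > of_nat deg * s"
    show "evalK p (M2 a b c d) q = 0"
      by (auto intro!: sum.neutral split: prod.splits dest!: mono simp: bnd_def q)
  next
    show "evalK p (M2 a b c d) (of_nat deg * s) = evalC p (M2 (a s) (b s) (c s) (d s))"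
      by (auto intro!: sum.cong split: prod.splits dest!: mono simp: bnd_def)
  qed
qed

lemma puiseux_cover:
  assumes "puiseux a" "puiseux b" "\<forall>q. x q \<noteq> 0 \<longrightarrow> a q \<noteq> 0 \<or> b q \<noteq> 0"
  shows "puiseux x"
proof -
  obtain N1 where N1: "N1 \<ge> 1" "\<forall>q. a q \<noteq> 0 \<longrightarrow> q * of_nat N1 \<in> \<int>" "bdd_above {q. a q \<noteq> 0}"
    using assms(1) unfolding puiseux_def by blast
  obtain N2 where N2: "N2 \<ge> 1" "\<forall>q. b q \<noteq> 0 \<longrightarrow> q * of_nat N2 \<in> \<int>" "bdd_above {q. b q \<noteq> 0}"
    using assms(2) unfolding puiseux_def by blast
  have "N1 * N2 \<ge> 1" using N1 N2 by simp
  moreover have "q * of_nat (N1 * N2) \<in> \<int>" if "x q \<noteq> 0" for q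
  proof -
    have "a q \<noteq> 0 \<or> b q \<noteq> 0" using assms(3) that by blast
    then show ?thesis
    proof
      assume "a q \<noteq> 0"
      then have "q * of_nat N1 \<in> \<int>" using N1 by auto
      then have "q * of_nat N1 * of_nat N2 \<in> \<int>" using Ints_mult Ints_of_nat by blast
      then show ?thesis by (simp add: mult.assoc)
    next
      assume "b q \<noteq> 0"
      then have "q * of_nat N2 \<in> \<int>" using N2 by auto
      then have "q * of_nat N2 * of_nat N1 \<in> \<int>" using Ints_mult Ints_of_nat by blast
      then show ?thesis by (simp add: mult_ac)
    qed
  qed
  moreover have "bdd_above {q. x q \<noteq> 0}"
  proof -
    have "{q. x q \<noteq> 0} \<subseteq> {q. a q \<noteq> 0} \<union> {q. b q \<noteq> 0}" using assms(3) by blast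
    then show ?thesis using N1(3) N2(3) bdd_above_Un bdd_above_mono by metis
  qed
  ultimately show ?thesis unfolding puiseux_def by blast
qed

lemma puiseux_conv:
  assumes "puiseux a" "puiseux b"
  shows "puiseux (conv a b)"
proof -
  obtain N1 where N1: "N1 \<ge> 1" "\<forall>q. a q \<noteq> 0 \<longrightarrow> q * of_nat N1 \<in> \<int>" "bdd_above {q. a q \<noteq> 0}"
    using assms(1) unfolding puiseux_def by blast
  obtain N2 where N2: "N2 \<ge> 1" "\<forall>q. b q \<noteq> 0 \<longrightarrow> q * of_nat N2 \<in> \<int>" "bdd_above {q. b q \<noteq> 0}"
    using assms(2) unfolding puiseux_def by blast
  obtain M1 where M1: "\<forall>q. a q \<noteq> 0 \<longrightarrow> q \<le> M1" using N1(3) unfolding bdd_above_def by blast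
  obtain M2 where M2: "\<forall>q. b q \<noteq> 0 \<longrightarrow> q \<le> M2" using N2(3) unfolding bdd_above_def by blast
  have ex: "\<exists>r. a r \<noteq> 0 \<and> b (q - r) \<noteq> 0" if "conv a b q \<noteq> 0" for q
  proof (rule ccontr)
    assume "\<not> ?thesis"
    then have e: "{r. a r \<noteq> 0 \<and> b (q - r) \<noteq> 0} = {}" by blast
    show False using that unfolding conv_def e by simp
  qed
  have "N1 * N2 \<ge> 1" using N1 N2 by simp
  moreover have "q * of_nat (N1 * N2) \<in> \<int>" if h: "conv a b q \<noteq> 0" for q
  proof -
    obtain r where r: "a r \<noteq> 0" "b (q - r) \<noteq> 0" using ex[OF h] by blast
    have "r * of_nat N1 \<in> \<int>" using N1 r by auto
    then have "r * of_nat N1 * of_nat N2 \<in> \<int>" using Ints_mult Ints_of_nat by blast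
    moreover have "(q - r) * of_nat N2 \<in> \<int>" using N2 r by auto
    then have "(q - r) * of_nat N2 * of_nat N1 \<in> \<int>" using Ints_mult Ints_of_nat by blast
    ultimately have "r * of_nat N1 * of_nat N2 + (q - r) * of_nat N2 * of_nat N1 \<in> \<int>"
      by (rule Ints_add)
    moreover have "r * of_nat N1 * of_nat N2 + (q - r) * of_nat N2 * of_nat N1 = q * of_nat (N1 * N2)"
      by (simp add: algebra_simps)
    ultimately show ?thesis by simp
  qed
  moreover have "bdd_above {q. conv a b q \<noteq> 0}"
    unfolding bdd_above_def
  proof (intro exI ballI)
    fix q assume "q \<in> {q. conv a b q \<noteq> 0}"
    then obtain r where r: "a r \<noteq> 0" "b (q - r) \<noteq> 0" using ex by blast
    then show "q \<le> M1 + M2" using M1 M2 by force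
  qed
  ultimately show ?thesis unfolding puiseux_def by blast
qed

lemma discrete_max:
  fixes S :: "rat set"
  assumes "S \<noteq> {}" "bdd_above S" "N \<ge> 1" "\<forall>q\<in>S. q * of_nat N \<in> \<int>"
  shows "\<exists>m\<in>S. \<forall>q\<in>S. q \<le> m"
proof -
  obtain M where M: "\<forall>q\<in>S. q \<le> M" using assms(2) unfolding bdd_above_def by blast
  obtain q0 where q0: "q0 \<in> S" using assms(1) by blast
  define m where "m (q::rat) = nat (\<lfloor>M * of_nat N\<rfloor> - \<lfloor>q * of_nat N\<rfloor>)" for q
  obtain x where x: "x \<in> S" "\<forall>y. y \<in> S \<longrightarrow> m x \<le> m y"
    using ex_has_least_nat[of "\<lambda>q. q \<in> S" q0 m] q0 by blast
  have fl: "of_int \<lfloor>q * of_nat N\<rfloor> = q * of_nat N" if "q \<in> S" for q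
    using assms(4) that by (metis Ints_cases floor_of_int)
  have le: "\<lfloor>q * of_nat N\<rfloor> \<le> \<lfloor>M * of_nat N\<rfloor>" if "q \<in> S" for q
    using M that by (intro floor_mono mult_right_mono) auto
  have "q \<le> x" if "q \<in> S" for q
  proof -
    have "m x \<le> m q" using x that by blast
    then have "\<lfloor>q * of_nat N\<rfloor> \<le> \<lfloor>x * of_nat N\<rfloor>"
      using le[OF that] le[OF x(1)] unfolding m_def by linarith
    then have "(of_int \<lfloor>q * of_nat N\<rfloor> :: rat) \<le> of_int \<lfloor>x * of_nat N\<rfloor>" by linarith
    then have "q * of_nat N \<le> x * of_nat N" using fl[OF that] fl[OF x(1)] by simp
    then show ?thesis using assms(3) by simp
  qed
  then show ?thesis using x(1) by blast
qed

lemma puiseux_max: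
  assumes "puiseux a" "a \<noteq> pzero"
  shows "\<exists>m. a m \<noteq> 0 \<and> (\<forall>q>m. a q = 0)"
proof -
  obtain N where N: "N \<ge> 1" "\<forall>q. a q \<noteq> 0 \<longrightarrow> q * of_nat N \<in> \<int>" "bdd_above {q. a q \<noteq> 0}"
    using assms(1) unfolding puiseux_def by blast
  have "{q. a q \<noteq> 0} \<noteq> {}" using assms(2) unfolding pzero_def by auto
  then obtain m where "m \<in> {q. a q \<noteq> 0}" "\<forall>q\<in>{q. a q \<noteq> 0}. q \<le> m"
    using discrete_max[of "{q. a q \<noteq> 0}" N] N by blast
  then show ?thesis by (metis mem_Collect_eq not_le)
qed

definition emb :: "nat \<Rightarrow> rat \<Rightarrow> complex \<Rightarrow> complex fps \<Rightarrow> ps" where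
  "emb N s c g = (\<lambda>q. if (s - q) * of_nat N \<in> \<nat> then c * fps_nth g (nat \<lfloor>(s - q) * of_nat N\<rfloor>) else 0)"

lemma emb_at:
  assumes "N \<ge> 1"
  shows "emb N s c g (s - of_nat k / of_nat N) = c * fps_nth g k"
proof -
  have "(s - (s - of_nat k / of_nat N)) * of_nat N = (of_nat k :: rat)" using assms by simp
  then show ?thesis unfolding emb_def by simp
qed

lemma emb_supp:
  assumes "N \<ge> 1" "emb N s c g q \<noteq> 0"
  shows "\<exists>k. q = s - of_nat k / of_nat N"
proof -
  have "(s - q) * of_nat N \<in> \<nat>" using assms(2) unfolding emb_def by (auto split: if_splits)
  then obtain k where k: "(s - q) * of_nat N = of_nat k" by (auto elim: Nats_cases)
  then have "q = s - of_nat k / of_nat N" using assms(1) by (simp add: field_simps)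
  then show ?thesis by blast
qed

lemma emb_mult:
  assumes N: "N \<ge> 1"
  shows "conv (emb N s1 c1 g1) (emb N s2 c2 g2) = emb N (s1 + s2) (c1 * c2) (g1 * g2)"
proof
  fix q
  let ?e1 = "emb N s1 c1 g1" and ?e2 = "emb N s2 c2 g2"
  let ?X = "{r. ?e1 r \<noteq> 0 \<and> ?e2 (q - r) \<noteq> 0}"
  have Nr: "(of_nat N :: rat) \<noteq> 0" using N by simp
  have key: "\<exists>i j. r = s1 - of_nat i / of_nat N \<and> q - r = s2 - of_nat j / of_nat N" if "r \<in> ?X" for r
    using emb_supp[OF N, of s1 c1 g1 r] emb_supp[OF N, of s2 c2 g2 "q - r"] that by auto
  show "conv ?e1 ?e2 q = emb N (s1 + s2) (c1 * c2) (g1 * g2) q"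
  proof (cases "(s1 + s2 - q) * of_nat N \<in> \<nat>")
    case False
    have X0: "?X = {}"
    proof (rule ccontr)
      assume "?X \<noteq> {}"
      then obtain r where "r \<in> ?X" by blast
      then obtain i j where ij: "r = s1 - of_nat i / of_nat N" "q - r = s2 - of_nat j / of_nat N"
        using key by blast
      then have "(s1 + s2 - q) * of_nat N = of_nat (i + j)" using Nr by (simp add: field_simps)
      then show False using False by simp
    qed
    show ?thesis using False unfolding conv_def X0 emb_def[of N "s1 + s2"] by simp
  next
    case True
    then obtain m where m: "(s1 + s2 - q) * of_nat N = of_nat m" by (auto elim: Nats_cases)
    have qm: "q = s1 + s2 - of_nat m / of_nat N" using m Nr by (simp add: field_simps)
    have rhs: "emb N (s1 + s2) (c1 * c2) (g1 * g2) q = c1 * c2 * fps_nth (g1 * g2) m"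
      unfolding qm by (rule emb_at[OF N])
    define rr where "rr i = s1 - of_nat i / of_nat N" for i :: nat
    have inj: "inj_on rr {0..m}" unfolding rr_def inj_on_def using Nr by (auto simp: field_simps)
    have sub: "?X \<subseteq> rr ` {0..m}"
    proof
      fix r assume "r \<in> ?X"
      then obtain i j where ij: "r = s1 - of_nat i / of_nat N" "q - r = s2 - of_nat j / of_nat N"
        using key by blast
      then have "(of_nat m :: rat) = of_nat i + of_nat j" using qm Nr by (simp add: field_simps)
      then have "m = i + j" by (metis of_nat_add of_nat_eq_iff)
      then show "r \<in> rr ` {0..m}" using ij unfolding rr_def by auto
    qed
    have "conv ?e1 ?e2 q = (\<Sum>r\<in>rr ` {0..m}. ?e1 r * ?e2 (q - r))"
      unfolding conv_def by (rule sum.mono_neutral_left) (use sub in auto)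
    also have "\<dots> = (\<Sum>i\<in>{0..m}. ?e1 (rr i) * ?e2 (q - rr i))"
      by (rule sum.reindex[OF inj, unfolded comp_def])
    also have "\<dots> = (\<Sum>i\<in>{0..m}. (c1 * c2) * (fps_nth g1 i * fps_nth g2 (m - i)))"
    proof (rule sum.cong[OF refl])
      fix i assume i: "i \<in> {0..m}"
      have "q - rr i = s2 - of_nat (m - i) / of_nat N"
        using i Nr unfolding qm rr_def by (simp add: of_nat_diff field_simps)
      then show "?e1 (rr i) * ?e2 (q - rr i) = (c1 * c2) * (fps_nth g1 i * fps_nth g2 (m - i))"
        unfolding rr_def using emb_at[OF N] by simp
    qed
    also have "\<dots> = c1 * c2 * fps_nth (g1 * g2) m"
      by (simp add: fps_mult_nth sum_distrib_left)
    finally show ?thesis using rhs by simp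
  qed
qed

lemma emb_one: "N \<ge> 1 \<Longrightarrow> emb N 0 1 1 = tpow 0"
proof
  fix q assume N: "N \<ge> 1"
  show "emb N 0 1 1 q = tpow 0 q"
  proof (cases "(0 - q) * of_nat N \<in> \<nat>")
    case True
    then obtain k where k: "(0 - q) * of_nat N = of_nat k" by (auto elim: Nats_cases)
    have "k = 0 \<longleftrightarrow> q = 0" using k N by auto
    then show ?thesis unfolding emb_def tpow_def using True k by auto
  next
    case False
    then have "q \<noteq> 0" by auto
    then show ?thesis unfolding emb_def tpow_def using False by auto
  qed
qed

lemma Ints_nonneg_Nats: "(x::rat) \<in> \<int> \<Longrightarrow> x \<ge> 0 \<Longrightarrow> x \<in> \<nat>"
  by (metis Ints_cases of_nat_in_Nats nonneg_int_cases of_int_0_le_iff of_int_of_nat_eq)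

lemma sqrt_inv_exists:
  assumes D: "puiseux D" "D \<noteq> pzero"
  shows "\<exists>l. puiseux l \<and> conv (conv l l) D = tpow 0"
proof -
  obtain N where N: "N \<ge> 1" "\<forall>q. D q \<noteq> 0 \<longrightarrow> q * of_nat N \<in> \<int>"
    using D(1) unfolding puiseux_def by blast
  have Nr: "(of_nat N :: rat) \<noteq> 0" using N by simp
  obtain \<delta> where dl: "D \<delta> \<noteq> 0" "\<forall>q>\<delta>. D q = 0" using puiseux_max[OF D] by blast
  define d where "d = D \<delta>"
  have d0: "d \<noteq> 0" using dl unfolding d_def by simp
  define h where "h = Abs_fps (\<lambda>k. D (\<delta> - of_nat k / of_nat N) / d)"
  have h0: "fps_nth h 0 = 1" unfolding h_def d_def using dl by simp
  have Demb: "D = emb N \<delta> d h"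
  proof
    fix q
    show "D q = emb N \<delta> d h q"
    proof (cases "(\<delta> - q) * of_nat N \<in> \<nat>")
      case True
      then obtain k where k: "(\<delta> - q) * of_nat N = of_nat k" by (auto elim: Nats_cases)
      have qk: "q = \<delta> - of_nat k / of_nat N" using k Nr by (simp add: field_simps)
      show ?thesis unfolding qk emb_at[OF N(1)] unfolding h_def using d0 by simp
    next
      case False
      have "D q = 0"
      proof (rule ccontr)
        assume Dq: "D q \<noteq> 0"
        then have "q \<le> \<delta>" using dl by (meson not_le)
        have "\<delta> * of_nat N - q * of_nat N \<in> \<int>" using N Dq dl by (intro Ints_diff) auto
        moreover have "\<delta> * of_nat N - q * of_nat N = (\<delta> - q) * of_nat N" by (simp add: algebra_simps)
        ultimately have "(\<delta> - q) * of_nat N \<in> \<int>" by simp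
        moreover have "(\<delta> - q) * of_nat N \<ge> 0" using \<open>q \<le> \<delta>\<close> by simp
        ultimately show False using False Ints_nonneg_Nats by blast
      qed
      then show ?thesis unfolding emb_def using False by simp
    qed
  qed
  define r where "r = fps_radical (\<lambda>_ _. 1) 2 (inverse h)"
  have "(fps_radical (\<lambda>_ _. 1) (Suc 1) (inverse h)) ^ (Suc 1) = inverse h"
    by (subst power_radical[symmetric]) (simp_all add: h0)
  then have rr: "r * r = inverse h" unfolding r_def by (simp add: power2_eq_square numeral_2_eq_2)
  have rrh: "r * r * h = 1" unfolding rr using h0 by (intro inverse_mult_eq_1) simp
  define c where "c = inverse (csqrt d)"
  have cs0: "csqrt d \<noteq> 0" using d0 by simp
  have "c * c * d = inverse (csqrt d) * inverse (csqrt d) * (csqrt d * csqrt d)"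
    using power2_csqrt[of d] unfolding c_def by (simp add: power2_eq_square)
  also have "\<dots> = 1" using cs0 by (simp add: field_simps)
  finally have ccd: "c * c * d = 1" .
  define l where "l = emb N (- \<delta> / 2) c r"
  have "conv (conv l l) D = emb N ((- \<delta> / 2 + - \<delta> / 2) + \<delta>) (c * c * d) (r * r * h)"
    unfolding l_def Demb by (simp add: emb_mult[OF N(1)])
  also have "\<dots> = tpow 0" using ccd rrh emb_one[OF N(1)] by simp
  finally have 1: "conv (conv l l) D = tpow 0" .
  have "puiseux l" unfolding puiseux_def
  proof (intro conjI exI[of _ "2 * N"])
    show "2 * N \<ge> 1" using N by simp
    show "\<forall>q. l q \<noteq> 0 \<longrightarrow> q * of_nat (2 * N) \<in> \<int>"
    proof (intro allI impI)
      fix q assume "l q \<noteq> 0"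
      then obtain k where k: "q = - \<delta> / 2 - of_nat k / of_nat N" using emb_supp[OF N(1)] unfolding l_def by blast
      have "q * of_nat (2 * N) = - (\<delta> * of_nat N) - 2 * of_nat k" unfolding k using Nr by (simp add: field_simps)
      moreover have "\<delta> * of_nat N \<in> \<int>" using N dl by auto
      ultimately show "q * of_nat (2 * N) \<in> \<int>" by simp
    qed
    show "bdd_above {q. l q \<noteq> 0}" unfolding bdd_above_def
    proof (intro exI[of _ "- \<delta> / 2"] ballI)
      fix q assume "q \<in> {q. l q \<noteq> 0}"
      then obtain k where k: "q = - \<delta> / 2 - of_nat k / of_nat N" using emb_supp[OF N(1)] unfolding l_def by blast
      show "q \<le> - \<delta> / 2" unfolding k by simp
    qed
  qed
  then show ?thesis using 1 by blast
qed

lemma evalC_smult: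
  assumes "homog p deg"
  shows "evalC p (M2 (z * a) (z * b) (z * c) (z * d)) = z ^ deg * evalC p (M2 a b c d)"
proof -
  have "evalC p (M2 (z * a) (z * b) (z * c) (z * d)) =
    (\<Sum>e\<in>{e. p e \<noteq> 0}. z ^ deg * (p e * (case e of (i, j, k, l) \<Rightarrow> a ^ i * b ^ j * c ^ k * d ^ l)))"
  proof (simp, rule sum.cong[OF refl])
    fix e assume e: "e \<in> {e. p e \<noteq> 0}"
    obtain i j k l where el: "e = (i, j, k, l)" by (cases e) auto
    have "i + j + k + l = deg" using assms e el unfolding homog_def by auto
    then have "z ^ deg = z ^ i * z ^ j * z ^ k * z ^ l" by (metis power_add)
    then show "p e * (case e of (i, j, k, l) \<Rightarrow> (z * a) ^ i * (z * b) ^ j * (z * c) ^ k * (z * d) ^ l) =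
         z ^ deg * (p e * (case e of (i, j, k, l) \<Rightarrow> a ^ i * b ^ j * c ^ k * d ^ l))"
      unfolding el by (simp add: power_mult_distrib mult_ac)
  qed
  also have "\<dots> = z ^ deg * evalC p (M2 a b c d)" by (simp add: sum_distrib_left)
  finally show ?thesis .
qed

lemma f0_nonzero:
  assumes "homog p 0" "\<not> det_dvd p"
  shows "evalC p B \<noteq> 0"
proof -
  have sub: "{e. p e \<noteq> 0} \<subseteq> {(0, 0, 0, 0)}" using assms(1) unfolding homog_def by auto
  have "p (0, 0, 0, 0) \<noteq> 0"
  proof
    assume p0: "p (0, 0, 0, 0) = 0"
    then have "\<forall>e. p e = 0" using sub by auto
    moreover have "\<forall>e. detmul (\<lambda>_. 0) e = 0" by auto
    ultimately have "det_dvd p" unfolding det_dvd_def by (intro exI[of _ "\<lambda>_. 0"]) auto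
    then show False using assms(2) by simp
  qed
  then have E: "{e. p e \<noteq> 0} = {(0, 0, 0, 0)}" using sub by auto
  obtain a b c d where B: "B = M2 a b c d" by (cases B)
  show ?thesis unfolding B using \<open>p (0, 0, 0, 0) \<noteq> 0\<close> by (simp add: E)
qed

lemma top_single:
  assumes "finite J" "k \<in> J" "\<forall>j\<in>J. bnd (T j) (E j) (c j)" "\<forall>j\<in>J. j \<noteq> k \<longrightarrow> E j < E k"
    and "(\<Sum>j\<in>J. T j (E k)) = 0"
  shows "c k = 0"
proof -
  have "(\<Sum>j\<in>J. T j (E k)) = (\<Sum>j\<in>J. if j = k then c k else 0)"
    using assms(3,4) unfolding bnd_def by (intro sum.cong) auto
  then show ?thesis using assms by simp
qed

lemma top_pair:
  assumes "finite J" "k \<in> J" "k' \<in> J" "k' \<noteq> k" "\<forall>j\<in>J. bnd (T j) (E j) (c j)" "E k' = E k"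
    "\<forall>j\<in>J. j \<noteq> k \<and> j \<noteq> k' \<longrightarrow> E j < E k"
    and "(\<Sum>j\<in>J. T j (E k)) = 0"
  shows "c k + c k' = 0"
proof -
  have "(\<Sum>j\<in>J. T j (E k)) = (\<Sum>j\<in>J. (if j = k then c k else 0) + (if j = k' then c k' else 0))"
    using assms(4,5,6,7) unfolding bnd_def by (intro sum.cong) auto
  also have "\<dots> = c k + c k'" using assms(1,2,3) by (simp add: sum.distrib)
  finally show ?thesis using assms by simp
qed

lemma lexp_eq:
  assumes "\<forall>q>s. a q = 0 \<and> b q = 0 \<and> c q = 0 \<and> d q = 0" "a s \<noteq> 0 \<or> b s \<noteq> 0 \<or> c s \<noteq> 0 \<or> d s \<noteq> 0"
  shows "lexp (M2 a b c d) = s"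
  unfolding lexp_def
proof (rule Greatest_equality)
  show "\<exists>x\<in>set (ents (M2 a b c d)). x s \<noteq> 0" using assms(2) by auto
next
  fix y assume "\<exists>x\<in>set (ents (M2 a b c d)). x y \<noteq> 0"
  then show "y \<le> s" using assms(1) by (auto simp: not_le[symmetric])
qed

lemma A_max:
  assumes "Kmat (M2 a b c d)"
  shows "\<exists>\<beta>. (\<forall>q>\<beta>. a q = 0 \<and> b q = 0 \<and> c q = 0 \<and> d q = 0) \<and> (a \<beta> \<noteq> 0 \<or> b \<beta> \<noteq> 0 \<or> c \<beta> \<noteq> 0 \<or> d \<beta> \<noteq> 0)"
proof -
  have P: "puiseux a" "puiseux b" "puiseux c" "puiseux d" using assms unfolding Kmat_def by auto
  define u1 :: ps where "u1 = (\<lambda>q. if a q \<noteq> 0 \<or> b q \<noteq> 0 then 1 else 0)"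
  define u2 :: ps where "u2 = (\<lambda>q. if c q \<noteq> 0 \<or> d q \<noteq> 0 then 1 else 0)"
  define u :: ps where "u = (\<lambda>q. if u1 q \<noteq> 0 \<or> u2 q \<noteq> 0 then 1 else 0)"
  have p1: "puiseux u1" by (rule puiseux_cover[OF P(1) P(2)]) (simp add: u1_def)
  have p2: "puiseux u2" by (rule puiseux_cover[OF P(3) P(4)]) (simp add: u2_def)
  have pu: "puiseux u" by (rule puiseux_cover[OF p1 p2]) (simp add: u_def)
  have "u \<noteq> pzero"
  proof
    assume "u = pzero"
    then have "\<forall>q. a q = 0 \<and> b q = 0 \<and> c q = 0 \<and> d q = 0"
      unfolding u_def u1_def u2_def pzero_def by (metis one_neq_zero)
    then have "M2 a b c d = M2 pzero pzero pzero pzero" unfolding pzero_def by auto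
    then show False using assms unfolding Kmat_def by simp
  qed
  then obtain m where "u m \<noteq> 0" "\<forall>q>m. u q = 0" using puiseux_max[OF pu] by blast
  then show ?thesis unfolding u_def u1_def u2_def by (intro exI[of _ m]) (auto split: if_splits)
qed

lemma Cset_mem: "B \<noteq> czero \<Longrightarrow> cdet B = 0 \<Longrightarrow> evalC (f j) B = 0 \<Longrightarrow> cproj B \<in> Cset f j"
  unfolding Cset_def by blast

lemma restrS_mem: "B \<noteq> czero \<Longrightarrow> cdet B = 0 \<Longrightarrow> cproj B \<in> Z \<Longrightarrow> rproj B \<in> restrS Z"
  unfolding restrS_def by blast

lemma cone_mem: "\<alpha> \<in> I \<Longrightarrow> B \<noteq> czero \<Longrightarrow> rproj B \<in> T \<Longrightarrow>
  cproj (cadd (csmult (complex_of_real (exp \<alpha>)) B) (csmult (complex_of_real (exp (- \<alpha>))) (cstar (adjc B))))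
   \<in> cone I T"
  unfolding cone_def by blast

lemma csmult_1: "csmult 1 B = B"
  by (cases B) (simp add: csmult_def)

lemma not_Cset:
  assumes "homog (f j) deg" "evalC (f j) B \<noteq> 0"
  shows "cproj B \<notin> Cset f j"
proof
  assume "cproj B \<in> Cset f j"
  then obtain B' where B': "cproj B = cproj B'" "evalC (f j) B' = 0" unfolding Cset_def by blast
  have "B \<in> cproj B" unfolding cproj_def using csmult_1 by (metis (mono_tags, lifting) mem_Collect_eq one_neq_zero)
  then obtain z where z: "B = csmult z B'" using B'(1) unfolding cproj_def by auto
  obtain a b c d where "B' = M2 a b c d" by (cases B')
  then have "evalC (f j) B = z ^ deg * evalC (f j) B'" using z evalC_smult[OF assms(1)] by (simp add: csmult_def)
  then show False using B'(2) assms(2) by simp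
qed

lemma core:
  fixes a b c d :: ps and \<beta> \<delta> :: rat and d0 :: complex
  assumes bA: "bnd a \<beta> (a \<beta>)" "bnd b \<beta> (b \<beta>)" "bnd c \<beta> (c \<beta>)" "bnd d \<beta> (d \<beta>)"
    and bD: "bnd (Kdet (M2 a b c d)) \<delta> d0"
    and F: "Fpoly n f (M2 a b c d) = pzero"
    and H: "\<forall>j\<le>n. homog (f j) (2 * j)"
  shows "\<exists>E. (\<forall>j. E j = - of_nat (j * (j + 1)) + (of_nat (n - j) * \<delta> + of_nat (2 * j) * \<beta>)) \<and>
    (\<forall>k. k \<le> n \<longrightarrow> (\<forall>j\<le>n. j \<noteq> k \<longrightarrow> E j < E k) \<longrightarrow>
       d0 ^ (n - k) * evalC (f k) (M2 (a \<beta>) (b \<beta>) (c \<beta>) (d \<beta>)) = 0) \<and>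
    (\<forall>k. 1 \<le> k \<longrightarrow> k \<le> n \<longrightarrow> E (k - 1) = E k \<longrightarrow> (\<forall>j\<le>n. j \<noteq> k \<and> j \<noteq> k - 1 \<longrightarrow> E j < E k) \<longrightarrow>
       d0 ^ (n - k) * evalC (f k) (M2 (a \<beta>) (b \<beta>) (c \<beta>) (d \<beta>)) +
       d0 ^ (n - (k - 1)) * evalC (f (k - 1)) (M2 (a \<beta>) (b \<beta>) (c \<beta>) (d \<beta>)) = 0)"
proof -
  define E where "E j = - of_nat (j * (j + 1)) + (of_nat (n - j) * \<delta> + of_nat (2 * j) * \<beta>)" for j
  define B0 where "B0 = M2 (a \<beta>) (b \<beta>) (c \<beta>) (d \<beta>)"
  define T where "T j = conv (tpow (- of_nat (j * (j + 1))))
           (conv (ppow (Kdet (M2 a b c d)) (n - j)) (evalK (f j) (M2 a b c d)))" for j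
  define cc where "cc j = 1 * (d0 ^ (n - j) * evalC (f j) B0)" for j
  have bT: "\<forall>j\<in>{0..n}. bnd (T j) (E j) (cc j)"
  proof
    fix j assume "j \<in> {0..n}"
    then have h: "homog (f j) (2 * j)" using H by auto
    show "bnd (T j) (E j) (cc j)" unfolding T_def E_def cc_def B0_def
      by (intro bnd_conv bnd_tpow bnd_ppow bD bnd_evalK bA h)
  qed
  have S: "(\<Sum>j\<in>{0..n}. T j q) = 0" for q
    using fun_cong[OF F, of q] unfolding Fpoly_def T_def pzero_def by simp
  have 1: "d0 ^ (n - k) * evalC (f k) B0 = 0" if "k \<le> n" "\<forall>j\<le>n. j \<noteq> k \<longrightarrow> E j < E k" for k
    using top_single[of "{0..n}" k T E cc, OF _ _ bT _ S] that unfolding cc_def by auto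
  have 2: "d0 ^ (n - k) * evalC (f k) B0 + d0 ^ (n - (k - 1)) * evalC (f (k - 1)) B0 = 0"
    if "1 \<le> k" "k \<le> n" "E (k - 1) = E k" "\<forall>j\<le>n. j \<noteq> k \<and> j \<noteq> k - 1 \<longrightarrow> E j < E k" for k
    using top_pair[of "{0..n}" k "k - 1" T E cc, OF _ _ _ _ bT _ _ S] that unfolding cc_def by auto
  show ?thesis using 1 2 unfolding B0_def by (intro exI[of _ E]) (auto simp: E_def)
qed

lemma E_form:
  fixes \<beta> \<delta> \<alpha> :: rat
  assumes "j \<le> n" "\<delta> = 2 * \<beta> - 2 * \<alpha>"
  shows "- of_nat (j * (j + 1)) + (of_nat (n - j) * \<delta> + of_nat (2 * j) * \<beta>)
     = of_nat n * \<delta> + (2 * of_nat j * \<alpha> - of_nat j * (of_nat j + 1))"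
  using assms(1) unfolding assms(2) by (simp add: of_nat_diff algebra_simps)

lemma e_less:
  fixes \<alpha> :: rat
  assumes "(j < k \<and> 2 * \<alpha> > of_nat k + of_nat j + 1) \<or> (k < j \<and> 2 * \<alpha> < of_nat k + of_nat j + 1)"
  shows "2 * of_nat j * \<alpha> - of_nat j * (of_nat j + 1) < 2 * of_nat k * \<alpha> - of_nat k * (of_nat k + 1)"
proof -
  have eq: "(2 * of_nat k * \<alpha> - of_nat k * (of_nat k + 1)) - (2 * of_nat j * \<alpha> - of_nat j * (of_nat j + 1))
     = (of_nat k - of_nat j) * (2 * \<alpha> - of_nat k - of_nat j - 1)" by (simp add: algebra_simps)
  have "(of_nat k - of_nat j) * (2 * \<alpha> - of_nat k - of_nat j - 1) > (0::rat)"
    using assms by (auto intro: mult_pos_pos mult_neg_neg)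
  then show ?thesis using eq by linarith
qed



lemma real_rat_gt: "real_of_rat \<alpha> > real k \<longleftrightarrow> \<alpha> > of_nat k"
  by (metis of_rat_less of_rat_of_nat_eq)
lemma real_rat_lt: "real_of_rat \<alpha> < real k + 1 \<longleftrightarrow> \<alpha> < of_nat k + 1"
  by (metis of_rat_less of_rat_of_nat_eq of_nat_Suc add.commute)

theorem theorem5p1:
  fixes n :: nat and f :: "nat \<Rightarrow> cpoly4"
  assumes "n \<ge> 1"
    and "\<forall>j\<le>n. homog (f j) (2 * j)"
    and "\<forall>j\<le>n. \<not> det_dvd (f j)"
  shows "VAL ` Surf n f \<subseteq> Sig_inf n f \<union> Sig_R n f \<union> Sig_C n f"
proof
  fix V assume "V \<in> VAL ` Surf n f"
  then obtain A where AS: "A \<in> Surf n f" and V: "V = VAL A" by blast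
  have KA: "Kmat A" and FA: "Fpoly n f A = pzero" using AS unfolding Surf_def by auto
  obtain a b c d where Aeq: "A = M2 a b c d" by (cases A)
  have P: "puiseux a" "puiseux b" "puiseux c" "puiseux d" using KA unfolding Aeq Kmat_def by auto
  obtain \<beta> where \<beta>1: "\<forall>q>\<beta>. a q = 0 \<and> b q = 0 \<and> c q = 0 \<and> d q = 0"
    and \<beta>2: "a \<beta> \<noteq> 0 \<or> b \<beta> \<noteq> 0 \<or> c \<beta> \<noteq> 0 \<or> d \<beta> \<noteq> 0"
    using A_max KA unfolding Aeq by blast
  have bA: "bnd a \<beta> (a \<beta>)" "bnd b \<beta> (b \<beta>)" "bnd c \<beta> (c \<beta>)" "bnd d \<beta> (d \<beta>)"
    using \<beta>1 by (auto simp: bnd_def)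
  define B0 where "B0 = M2 (a \<beta>) (b \<beta>) (c \<beta>) (d \<beta>)"
  have B0nz: "B0 \<noteq> czero" using \<beta>2 by (auto simp: B0_def czero_def)
  have bK: "bnd (Kdet A) (2 * \<beta>) (cdet B0)" using bnd_Kdet[OF bA] unfolding Aeq B0_def .
  have H: "\<forall>j\<le>n. homog (f j) (2 * j)" using assms(2) .
  have FA': "Fpoly n f (M2 a b c d) = pzero" using FA Aeq by simp
  show "V \<in> Sig_inf n f \<union> Sig_R n f \<union> Sig_C n f"
  proof (cases "Kdet A = pzero")
    case True
    have le: "lexp A = \<beta>" unfolding Aeq by (rule lexp_eq[OF \<beta>1 \<beta>2])
    have VA: "VAL A = cproj B0"
      unfolding VAL_def if_P[OF True] lead_def le unfolding Aeq B0_def by simp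
    have bD: "bnd (Kdet (M2 a b c d)) (2 * \<beta> - 2 * (of_nat n + 1)) 0"
      using True Aeq bnd_pzero by simp
    obtain E where Ed: "\<forall>j. E j = - of_nat (j * (j + 1)) + (of_nat (n - j) * (2 * \<beta> - 2 * (of_nat n + 1)) + of_nat (2 * j) * \<beta>)"
      and E1: "\<forall>k. k \<le> n \<longrightarrow> (\<forall>j\<le>n. j \<noteq> k \<longrightarrow> E j < E k) \<longrightarrow>
       0 ^ (n - k) * evalC (f k) B0 = 0"
      using core[OF bA bD FA' H] unfolding B0_def by blast
    have Ef: "E j = of_nat n * (2 * \<beta> - 2 * (of_nat n + 1)) + (2 * of_nat j * (of_nat n + 1) - of_nat j * (of_nat j + 1))"
      if "j \<le> n" for j
      using Ed E_form[OF that, of "2 * \<beta> - 2 * (of_nat n + 1)" \<beta> "of_nat n + 1"] by simp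
    have "\<forall>j\<le>n. j \<noteq> n \<longrightarrow> E j < E n"
    proof (intro allI impI)
      fix j assume "j \<le> n" "j \<noteq> n"
      then have "2 * of_nat j * (of_nat n + 1) - of_nat j * (of_nat j + 1) < 2 * of_nat n * (of_nat n + 1) - of_nat n * (of_nat n + (1::rat))"
        by (intro e_less) auto
      then show "E j < E n" using Ef[of j] Ef[of n] \<open>j \<le> n\<close> by simp
    qed
    then have "evalC (f n) B0 = 0" using E1 by auto
    moreover have "cdet B0 = 0" using bK True unfolding bnd_def pzero_def by simp
    ultimately have "cproj B0 \<in> Cset f n" using B0nz by (intro Cset_mem)
    then show ?thesis unfolding V VA Sig_inf_def by simp
  next
    case False
    have Kd: "Kdet A = (\<lambda>q. conv a d q - conv b c q)" unfolding Aeq by simp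
    have PD: "puiseux (Kdet A)" unfolding Kd
      by (rule puiseux_cover[OF puiseux_conv[OF P(1) P(4)] puiseux_conv[OF P(2) P(3)]]) auto
    obtain \<delta> where \<delta>: "Kdet A \<delta> \<noteq> 0" "\<forall>q>\<delta>. Kdet A q = 0" using puiseux_max[OF PD False] by blast
    define d0 where "d0 = Kdet A \<delta>"
    have d00: "d0 \<noteq> 0" using \<delta> d0_def by simp
    have bD: "bnd (Kdet A) \<delta> d0" using \<delta> by (simp add: bnd_def d0_def)
    have \<delta>le: "\<delta> \<le> 2 * \<beta>" using bK \<delta>(1) unfolding bnd_def by (meson not_le)
    define l where "l = (SOME l. puiseux l \<and> conv (conv l l) (Kdet A) = tpow 0)"
    have l: "puiseux l \<and> conv (conv l l) (Kdet A) = tpow 0"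
      unfolding l_def by (rule someI_ex[OF sqrt_inv_exists[OF PD False]])
    have lnz: "l \<noteq> pzero"
    proof
      assume "l = pzero"
      then have "conv (conv l l) (Kdet A) 0 = 0" by (simp add: conv_def pzero_def)
      then show False using l by (simp add: tpow_def)
    qed
    obtain \<gamma> where \<gamma>: "l \<gamma> \<noteq> 0" "\<forall>q>\<gamma>. l q = 0" using puiseux_max[OF conjunct1[OF l] lnz] by blast
    define g where "g = l \<gamma>"
    have g0: "g \<noteq> 0" using \<gamma> g_def by simp
    have bl: "bnd l \<gamma> g" using \<gamma> by (simp add: bnd_def g_def)
    have "bnd (conv (conv l l) (Kdet A)) (\<gamma> + \<gamma> + \<delta>) (g * g * d0)" by (intro bnd_conv bl bD)
    then have tp: "tpow 0 (\<gamma> + \<gamma> + \<delta>) = g * g * d0" using l by (simp add: bnd_def)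
    have "g * g * d0 \<noteq> 0" using g0 d00 by simp
    then have \<gamma>\<delta>: "\<gamma> + \<gamma> + \<delta> = 0" and ggd: "g * g * d0 = 1"
      using tp by (auto simp: tpow_def split: if_splits)
    define \<alpha> where "\<alpha> = \<gamma> + \<beta>"
    have \<delta>\<alpha>: "\<delta> = 2 * \<beta> - 2 * \<alpha>" using \<gamma>\<delta> unfolding \<alpha>_def by simp
    have blx: "bnd (conv l x) \<alpha> (g * x \<beta>)" if "bnd x \<beta> (x \<beta>)" for x
      unfolding \<alpha>_def by (rule bnd_conv[OF bl that])
    define B where "B = M2 (g * a \<beta>) (g * b \<beta>) (g * c \<beta>) (g * d \<beta>)"
    have ba: "bnd (conv l a) \<alpha> (g * a \<beta>)" "bnd (conv l b) \<alpha> (g * b \<beta>)"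
      "bnd (conv l c) \<alpha> (g * c \<beta>)" "bnd (conv l d) \<alpha> (g * d \<beta>)" using blx bA by auto
    have le: "lexp (M2 (conv l a) (conv l b) (conv l c) (conv l d)) = \<alpha>"
      by (rule lexp_eq) (use ba \<beta>2 g0 in \<open>auto simp: bnd_def\<close>)
    have ld: "lead (M2 (conv l a) (conv l b) (conv l c) (conv l d)) = B"
      unfolding lead_def le B_def using ba by (simp add: bnd_def)
    have m: "map_mat2 (conv l) A = M2 (conv l a) (conv l b) (conv l c) (conv l d)" by (simp add: Aeq)
    have VA: "VAL A = cproj (cadd (csmult (complex_of_real (exp (real_of_rat \<alpha>))) B)
                     (csmult (complex_of_real (exp (- real_of_rat \<alpha>))) (cstar (adjc B))))"
      unfolding VAL_def if_not_P[OF False] Let_def l_def[symmetric] m le ld ..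
    have Bnz: "B \<noteq> czero" using \<beta>2 g0 by (auto simp: B_def czero_def)
    have evB: "evalC (f j) B = g ^ (2 * j) * evalC (f j) B0" if "j \<le> n" for j
      unfolding B_def B0_def using evalC_smult H that by blast
    have bD': "bnd (Kdet (M2 a b c d)) \<delta> d0" using bD Aeq by simp
    obtain E where Ed: "\<forall>j. E j = - of_nat (j * (j + 1)) + (of_nat (n - j) * \<delta> + of_nat (2 * j) * \<beta>)"
      and E1: "\<forall>k. k \<le> n \<longrightarrow> (\<forall>j\<le>n. j \<noteq> k \<longrightarrow> E j < E k) \<longrightarrow>
       d0 ^ (n - k) * evalC (f k) B0 = 0"
      and E2: "\<forall>k. 1 \<le> k \<longrightarrow> k \<le> n \<longrightarrow> E (k - 1) = E k \<longrightarrow> (\<forall>j\<le>n. j \<noteq> k \<and> j \<noteq> k - 1 \<longrightarrow> E j < E k) \<longrightarrow>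
       d0 ^ (n - k) * evalC (f k) B0 + d0 ^ (n - (k - 1)) * evalC (f (k - 1)) B0 = 0"
      using core[OF bA bD' FA' H] unfolding B0_def by blast
    have Ef: "E j = of_nat n * \<delta> + (2 * of_nat j * \<alpha> - of_nat j * (of_nat j + 1))" if "j \<le> n" for j
      using Ed E_form[OF that \<delta>\<alpha>] by simp
    have Elt: "E j < E k" if "j \<le> n" "k \<le> n"
      "(j < k \<and> 2 * \<alpha> > of_nat k + of_nat j + 1) \<or> (k < j \<and> 2 * \<alpha> < of_nat k + of_nat j + 1)" for j k
      using e_less[OF that(3)] Ef[OF that(1)] Ef[OF that(2)] by simp
    have \<alpha>1: "\<alpha> \<ge> 1"
    proof (rule ccontr)
      assume "\<not> \<alpha> \<ge> 1"
      then have "\<forall>j\<le>n. j \<noteq> 0 \<longrightarrow> E j < E 0" by (intro allI impI Elt) auto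
      then have "d0 ^ n * evalC (f 0) B0 = 0" using E1 by auto
      moreover have "evalC (f 0) B0 \<noteq> 0" using f0_nonzero assms(2,3) by force
      ultimately show False using d00 by simp
    qed
    have "Kdet A (2 * \<beta>) = 0" using \<delta>(2) \<delta>\<alpha> \<alpha>1 by auto
    then have cd0: "cdet B0 = 0" using bK by (simp add: bnd_def)
    have cdB: "cdet B = 0" using cd0 unfolding B_def B0_def by (simp add: algebra_simps)
    have VC: "V = cproj (cadd (csmult (complex_of_real (exp (real_of_rat \<alpha>))) B)
                     (csmult (complex_of_real (exp (- real_of_rat \<alpha>))) (cstar (adjc B))))"
      using V VA by simp
    define k where "k = nat \<lfloor>\<alpha>\<rfloor>"
    have fl: "\<lfloor>\<alpha>\<rfloor> \<ge> 1" using \<alpha>1 by (simp add: le_floor_iff)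
    have kq: "(of_nat k :: rat) = of_int \<lfloor>\<alpha>\<rfloor>" unfolding k_def using fl by simp
    have k1: "of_nat k \<le> \<alpha>" "\<alpha> < of_nat k + 1"
      using kq by (auto simp: of_int_floor_le) linarith
    have k1': "k \<ge> 1" using fl unfolding k_def by arith
    have Sm: "V \<in> cone I (restrS (Cset f j))" if "real_of_rat \<alpha> \<in> I" "j \<le> n" "evalC (f j) B0 = 0" for I j
      unfolding VC using evB[OF that(2)] that(3)
      by (intro cone_mem that(1) Bnz restrS_mem cdB Cset_mem) auto
    show ?thesis
    proof (cases "\<alpha> = of_nat k \<and> k \<le> n")
      case True
      have kn: "k \<le> n" and ak: "\<alpha> = of_nat k" using True by auto
      have km: "(of_nat (k - 1) :: rat) = of_nat k - 1" using k1' by (simp add: of_nat_diff)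
      have kn1: "k - 1 \<le> n" using kn by simp
      have eq: "E (k - 1) = E k" using Ef[OF kn1] Ef[OF kn] unfolding km ak
        by (simp add: algebra_simps)
      have lt: "\<forall>j\<le>n. j \<noteq> k \<and> j \<noteq> k - 1 \<longrightarrow> E j < E k"
      proof (intro allI impI)
        fix j assume j: "j \<le> n" "j \<noteq> k \<and> j \<noteq> k - 1"
        show "E j < E k"
        proof (cases "j < k")
          case True
          then have "j + 2 \<le> k" using j by auto
          then have "(of_nat (j + 2) :: rat) \<le> of_nat k" by (simp only: of_nat_le_iff)
          then have hh: "2 * \<alpha> > of_nat k + of_nat j + 1" unfolding ak by simp
          show ?thesis by (rule Elt[OF j(1) kn disjI1]) (use True hh in auto)
        next
          case False
          then have "k + 1 \<le> j" using j by auto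
          then have "(of_nat (k + 1) :: rat) \<le> of_nat j" by (simp only: of_nat_le_iff)
          then have hh: "2 * \<alpha> < of_nat k + of_nat j + 1" unfolding ak by simp
          show ?thesis by (rule Elt[OF j(1) kn disjI2]) (use False hh j in auto)
        qed
      qed
      have rel: "d0 ^ (n - k) * evalC (f k) B0 + d0 ^ (n - (k - 1)) * evalC (f (k - 1)) B0 = 0"
        using E2 k1' kn eq lt by blast
      have nk: "n - (k - 1) = Suc (n - k)" using k1' kn by simp
      have "d0 ^ (n - k) * (evalC (f k) B0 + d0 * evalC (f (k - 1)) B0) = 0"
        using rel unfolding nk by (simp add: algebra_simps)
      then have r2: "evalC (f k) B0 = - d0 * evalC (f (k - 1)) B0" using d00
        by (simp add: add_eq_0_iff)
      have e2: "2 * k = 2 * (k - 1) + 2" using k1' by simp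
      have gk: "g ^ (2 * k) = g ^ (2 * (k - 1)) * (g * g)"
        by (subst e2) (simp add: power_add power2_eq_square)
      have rB: "evalC (f k) B = - evalC (f (k - 1)) B"
      proof -
        have "evalC (f k) B = g ^ (2 * (k - 1)) * (g * g * d0) * (- evalC (f (k - 1)) B0)"
          using evB[OF kn] r2 gk by (simp add: algebra_simps)
        also have "\<dots> = - evalC (f (k - 1)) B" using evB[of "k - 1"] kn ggd by simp
        finally show ?thesis .
      qed
      have mem: "rproj B \<in> sigma_img f k \<union> restrS (Cset f (k - 1) \<inter> Cset f k)"
      proof (cases "evalC (f (k - 1)) B = 0")
        case True
        then have "evalC (f k) B = 0" using rB by simp
        then have "cproj B \<in> Cset f (k - 1) \<inter> Cset f k" using True Bnz cdB by (auto intro: Cset_mem)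
        then show ?thesis using Bnz cdB by (auto intro: restrS_mem)
      next
        case False
        have s1: "sigma f k B = rproj B" unfolding sigma_def rB using False by (simp add: csmult_1)
        have h1: "homog (f (k - 1)) (2 * (k - 1))" using H kn by simp
        have h2: "homog (f k) (2 * k)" using H kn by simp
        have "evalC (f k) B \<noteq> 0" using False rB by simp
        have n2: "cproj B \<notin> Cset f k" by (rule not_Cset[of f k, OF h2]) fact
        have n1: "cproj B \<notin> Cset f (k - 1)" by (rule not_Cset[of f "k - 1", OF h1 False])
        have q: "cproj B \<in> Qset" using Bnz cdB unfolding Qset_def by blast
        from s1 n1 n2 q
        have "rproj B \<in> sigma_img f k" unfolding sigma_img_def using Bnz by blast
        then show ?thesis by simp
      qed
      have "V \<in> cone {real k} (sigma_img f k \<union> restrS (Cset f (k - 1) \<inter> Cset f k))"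
        unfolding VC using mem Bnz by (intro cone_mem) (auto simp: ak)
      then have "V \<in> Sig_C n f" unfolding Sig_C_def using k1' kn by auto
      then show ?thesis by simp
    next
      case False
      show ?thesis
      proof (cases "k \<ge> n")
        case True
        have an: "\<alpha> > of_nat n"
        proof (cases "k = n")
          case True
          then show ?thesis using False k1 by auto
        next
          case False
          then have "(of_nat n :: rat) < of_nat k" using \<open>k \<ge> n\<close> by simp
          then show ?thesis using k1 by linarith
        qed
        have "\<forall>j\<le>n. j \<noteq> n \<longrightarrow> E j < E n"
        proof (intro allI impI)
          fix j assume j: "j \<le> n" "j \<noteq> n"
          then have "j + 1 \<le> n" by auto
          then have "(of_nat (j + 1) :: rat) \<le> of_nat n" by (simp only: of_nat_le_iff)
          then have hh: "2 * \<alpha> > of_nat n + of_nat j + 1" using an by simp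
          show "E j < E n" by (rule Elt[OF j(1) order_refl disjI1]) (use j hh in auto)
        qed
        then have "evalC (f n) B0 = 0" using E1 by auto
        moreover have "real_of_rat \<alpha> \<in> {real n<..} \<inter> \<rat>" using an real_rat_gt by auto
        ultimately have "V \<in> cone ({real n<..} \<inter> \<rat>) (restrS (Cset f n))" using Sm by auto
        then show ?thesis unfolding Sig_R_def by auto
      next
        case False2: False
        have kn: "k < n" using False2 by simp
        have ak: "\<alpha> > of_nat k" using False k1 kn by auto
        have "\<forall>j\<le>n. j \<noteq> k \<longrightarrow> E j < E k"
        proof (intro allI impI)
          fix j assume j: "j \<le> n" "j \<noteq> k"
          show "E j < E k"
          proof (cases "j < k")
            case True
            then have "j + 1 \<le> k" by auto
            then have "(of_nat (j + 1) :: rat) \<le> of_nat k" by (simp only: of_nat_le_iff)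
            then have hh: "2 * \<alpha> > of_nat k + of_nat j + 1" using ak by simp
            show ?thesis by (rule Elt[OF j(1) _ disjI1]) (use True hh kn in auto)
          next
            case False
            then have "k + 1 \<le> j" using j by auto
            then have "(of_nat (k + 1) :: rat) \<le> of_nat j" by (simp only: of_nat_le_iff)
            then have hh: "2 * \<alpha> < of_nat k + of_nat j + 1" using k1 by simp
            show ?thesis by (rule Elt[OF j(1) _ disjI2]) (use False hh kn j in auto)
          qed
        qed
        then have "evalC (f k) B0 = 0" using E1 kn d00 by auto
        moreover have "real_of_rat \<alpha> \<in> {real k<..<real k + 1} \<inter> \<rat>"
          using ak k1 real_rat_gt real_rat_lt by auto
        ultimately have "V \<in> cone ({real k<..<real k + 1} \<inter> \<rat>) (restrS (Cset f k))"
          using Sm kn by auto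
        moreover have "k \<in> {1..n - 1}" using k1' kn by auto
        ultimately show ?thesis unfolding Sig_R_def by auto
      qed
    qed
  qed
qed

end
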